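(* For every institution $s$, the aggregate choice rule with transfers $\mathcal{C}^{hT}_s$ is fair: for every $Y\subseteq X$ and every $x\in Y_s$ with $\mathbf{i}(x)\notin\mathbf{i}(\mathcal{C}^{hT}_s(Y))$, every $y\in\mathcal{C}^{hT}_s(Y)$ satisfies at least one of: (1) $\mathbf{i}(y)\succ_s\mathbf{i}(x)$; (2) $\mathbf{t}(x)\neq\mathbf{t}(y)$; (3) $\rho(\mathbf{i}(y))\setminus\rho(\mathbf{i}(x))\neq\emptyset$.
   Context: Model. $I$ finite set of individuals, $S$ finite set of institutions. Reserve categories $R=\{SC,ST,OBC,EWS\}$, position types $V=\{o\}\cup R$ ($o$ = open). Institution $s$ has $q_s^r$ positions reserved for $r\in R$ and $q_s^o$ open positions. Individual $i$ has vertical membership $t(i)\in R\cup\{g\}$. Institution $s$ has a strict merit ranking $\succ_s$ of $I$. Contracts $X$: triples $(i,s,v)$ with $v=o$, or $v=t(i)$ if $t(i)\in R$; $\mathbf{i}(x),\mathbf{s}(x),\mathbf{t}(x)$ denote individual, institution, category; $Y_s$ the contracts in $Y$ with institution $s$, $\mathbf{i}(Y)=\{\mathbf{i}(x):x\in Y\}$. $H=\{h_1,\dots,h_L\}$ horizontal types, $\rho(i)\subseteq H$, $\rho^{-1}(h)=\{i:h\in\rho(i)\}$; hierarchical: if $\rho^{-1}(h)\cap\rho^{-1}(h')\neq\emptyset$ then one is a strict subset of the other ($h$ contains $h'$ if $\rho^{-1}(h')\subsetneq\rho^{-1}(h)$). Reservations $\kappa^s_v\in\mathbb{Z}_+^L$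 for each $s$, $v\in V$; chosen individuals count against all their types. Hierarchical choice rule $C^h(A,\kappa,\rho)$ with capacity $q$ and ranking $\succ$: Step 1: let $H^1$ be the types containing no other type. If no individual in $A$ has a type, choose the $\min(q,|A|)$ highest-ranked and stop. Otherwise, for each $h_j\in H^1$ (fixed order, not exceeding remaining positions), choose all not-yet-chosen type-$h_j$ individuals of $A$ if at most $\kappa_j$, else the $\kappa_j$ highest-ranked; reduce remaining positions and the reservation of every type containing $h_j$ by the number chosen (floored at 0); remove $h_j$. Step $n\ge2$: stop if nothing remains; if no type remains, fill remaining positions by rank and stop; otherwise process remaining types containing no other remaining type as in Step 1. Output: all chosen individuals. Aggregate rule with transfers $\mathcal{C}^{hT}_s$: process categories in order $o,SC,ST,OBC,EWS$; for category $v$, let $A_v$ be the individuals with a contract $(i,s,v)\in Y$ not chosen earlier, apply $C^h(A_v,\kappa^s_v,\rho)$ with capacity $q^v_s$ and ranking $\succ_s$, and select the contracts $(i,s,v)$ of the chosen. Then a final de-reserved category $D$ with capacity $q^D_s$ equal to the number of unfilled OBC positions ($q_s^{OBC}$ minus the number selected in category OBC) selects, among individuals not yet chosen who have an open-category contract $(i,s,o)\in Y$, the $\min(q^D_s,\cdot)$ highest-ranked according to $\succ_s$ (a responsive rule), and selects those contracts. $\mathcal{C}^{hT}_s(Y)$ is the union of all selected contracts. *)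

theory Defs
  imports Main
begin

text \<open>Reserve categories R = {SC, ST, OBC, EWS}; position types V = {o} plus R.
  Vertical membership t(i) is in R or g; we encode g as None.\<close>

datatype rcat = SC | ST | OBC | EWS
datatype ptype = Open | Res rcat

type_synonym ('i, 's) contract = "'i \<times> 's \<times> ptype"

definition indiv :: "('i, 's) contract \<Rightarrow> 'i" where
  "indiv x = fst x"
definition inst :: "('i, 's) contract \<Rightarrow> 's" where
  "inst x = fst (snd x)"
definition cat :: "('i, 's) contract \<Rightarrow> ptype" where
  "cat x = snd (snd x)"

definition contracts :: "('i \<Rightarrow> rcat option) \<Rightarrow> ('i, 's) contract set" where
  "contracts t = {(i, s, v). v = Open \<or> (\<exists>r. t i = Some r \<and> v = Res r)}"

text \<open>r a b means: a is ranked strictly higher than b.\<close>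
definition strict_ranking :: "('i \<Rightarrow> 'i \<Rightarrow> bool) \<Rightarrow> bool" where
  "strict_ranking r \<longleftrightarrow> (\<forall>a. \<not> r a a) \<and> (\<forall>a b c. r a b \<longrightarrow> r b c \<longrightarrow> r a c)
      \<and> (\<forall>a b. a \<noteq> b \<longrightarrow> r a b \<or> r b a)"

definition top_k :: "('i \<Rightarrow> 'i \<Rightarrow> bool) \<Rightarrow> nat \<Rightarrow> 'i set \<Rightarrow> 'i set" where
  "top_k r k B = {a \<in> B. card {b \<in> B. r b a} < k}"

definition members :: "('i \<Rightarrow> 'h set) \<Rightarrow> 'h \<Rightarrow> 'i set" where
  "members \<rho> h = {i. h \<in> \<rho> i}"

definition contains :: "('i \<Rightarrow> 'h set) \<Rightarrow> 'h \<Rightarrow> 'h \<Rightarrow> bool" where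
  "contains \<rho> h h' \<longleftrightarrow> members \<rho> h' \<subset> members \<rho> h"

text \<open>H is given as a list hs (its order is the fixed processing order).\<close>
definition hierarchical :: "'h list \<Rightarrow> ('i \<Rightarrow> 'h set) \<Rightarrow> bool" where
  "hierarchical hs \<rho> \<longleftrightarrow> distinct hs \<and> (\<forall>i. \<rho> i \<subseteq> set hs) \<and>
     (\<forall>h \<in> set hs. \<forall>h' \<in> set hs. h \<noteq> h' \<longrightarrow> members \<rho> h \<inter> members \<rho> h' \<noteq> {} \<longrightarrow>
         contains \<rho> h h' \<or> contains \<rho> h' h)"

text \<open>Processing one type h: state = (chosen, remaining positions, remaining reservations).\<close>
definition proc_type :: "('i \<Rightarrow> 'i \<Rightarrow> bool) \<Rightarrow> ('i \<Rightarrow> 'h set) \<Rightarrow> 'i set \<Rightarrow> 'h \<Rightarrow>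
    'i set \<times> nat \<times> ('h \<Rightarrow> nat) \<Rightarrow> 'i set \<times> nat \<times> ('h \<Rightarrow> nat)" where
  "proc_type r \<rho> A h st = (case st of (C, q, \<kappa>) \<Rightarrow>
     (let ch = top_k r (min (\<kappa> h) q) {a \<in> A. a \<notin> C \<and> h \<in> \<rho> a}
      in (C \<union> ch, q - card ch,
          \<lambda>h'. if contains \<rho> h' h then \<kappa> h' - card ch else \<kappa> h')))"

definition minimal_types :: "('i \<Rightarrow> 'h set) \<Rightarrow> 'h list \<Rightarrow> 'h list" where
  "minimal_types \<rho> R = filter (\<lambda>h. \<not> (\<exists>h' \<in> set R. contains \<rho> h h')) R"

text \<open>Steps of the rule; the first argument is a step budget (length hs + 1 suffices).\<close>
fun hsteps :: "('i \<Rightarrow> 'i \<Rightarrow> bool) \<Rightarrow> ('i \<Rightarrow> 'h set) \<Rightarrow> 'i set \<Rightarrow> nat \<Rightarrow>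
    'i set \<Rightarrow> nat \<Rightarrow> ('h \<Rightarrow> nat) \<Rightarrow> 'h list \<Rightarrow> 'i set" where
  "hsteps r \<rho> A 0 C q \<kappa> R = C"
| "hsteps r \<rho> A (Suc n) C q \<kappa> R =
     (if q = 0 then C
      else if R = [] then C \<union> top_k r q (A - C)
      else (let M = minimal_types \<rho> R;
                (C', q', \<kappa>') = fold (proc_type r \<rho> A) M (C, q, \<kappa>)
            in hsteps r \<rho> A n C' q' \<kappa>' (filter (\<lambda>h. h \<notin> set M) R)))"

definition choice_h :: "('i \<Rightarrow> 'i \<Rightarrow> bool) \<Rightarrow> 'h list \<Rightarrow> ('i \<Rightarrow> 'h set) \<Rightarrow> nat \<Rightarrow>
    ('h \<Rightarrow> nat) \<Rightarrow> 'i set \<Rightarrow> 'i set" where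
  "choice_h r hs \<rho> q \<kappa> A =
     (if \<forall>a \<in> A. \<rho> a = {} then top_k r q A
      else hsteps r \<rho> A (Suc (length hs)) {} q \<kappa> hs)"

definition cat_order :: "ptype list" where
  "cat_order = [Open, Res SC, Res ST, Res OBC, Res EWS]"

definition agg_step :: "('i \<Rightarrow> 'i \<Rightarrow> bool) \<Rightarrow> 'h list \<Rightarrow> ('i \<Rightarrow> 'h set) \<Rightarrow>
    (ptype \<Rightarrow> nat) \<Rightarrow> (ptype \<Rightarrow> 'h \<Rightarrow> nat) \<Rightarrow> 's \<Rightarrow> ('i, 's) contract set \<Rightarrow> ptype \<Rightarrow>
    'i set \<times> ('i, 's) contract set \<Rightarrow> 'i set \<times> ('i, 's) contract set" where
  "agg_step r hs \<rho> cap res s Y v st = (case st of (Ch, Z) \<Rightarrow>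
     (let Av = {i. (i, s, v) \<in> Y \<and> i \<notin> Ch};
          sel = choice_h r hs \<rho> (cap v) (res v) Av
      in (Ch \<union> sel, Z \<union> {(i, s, v) | i. i \<in> sel})))"

definition choice_hT :: "('s \<Rightarrow> 'i \<Rightarrow> 'i \<Rightarrow> bool) \<Rightarrow> 'h list \<Rightarrow> ('i \<Rightarrow> 'h set) \<Rightarrow>
    ('s \<Rightarrow> ptype \<Rightarrow> nat) \<Rightarrow> ('s \<Rightarrow> ptype \<Rightarrow> 'h \<Rightarrow> nat) \<Rightarrow> 's \<Rightarrow>
    ('i, 's) contract set \<Rightarrow> ('i, 's) contract set" where
  "choice_hT better hs \<rho> cap res s Y =
     (let (Ch, Z) = fold (agg_step (better s) hs \<rho> (cap s) (res s) s Y) cat_order ({}, {});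
          qD = cap s (Res OBC) - card {i. (i, s, Res OBC) \<in> Z};
          selD = top_k (better s) qD {i. (i, s, Open) \<in> Y \<and> i \<notin> Ch}
      in Z \<union> {(i, s, Open) | i. i \<in> selD})"

end

theory Submission
  imports Defs
begin

lemma top_k_sub: "top_k r k B \<subseteq> B"
  unfolding top_k_def by auto

lemma top_k_better:
  assumes sr: "strict_ranking r" and fin: "finite B" and a: "a \<in> top_k r k B"
    and b: "b \<in> B" "b \<notin> top_k r k B"
  shows "r a b"
proof (rule ccontr)
  assume nab: "\<not> r a b"
  have "a \<noteq> b" using a b by auto
  hence rba: "r b a" using sr nab unfolding strict_ranking_def by blast
  have sub: "insert b {c\<in>B. r c b} \<subseteq> {c\<in>B. r c a}"
    using rba sr b unfolding strict_ranking_def by blast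
  have "b \<notin> {c\<in>B. r c b}" using sr unfolding strict_ranking_def by blast
  hence e: "card (insert b {c\<in>B. r c b}) = Suc (card {c\<in>B. r c b})" using fin by simp
  have le: "card (insert b {c\<in>B. r c b}) \<le> card {c\<in>B. r c a}"
    using card_mono[OF _ sub] fin by simp
  have "card {c\<in>B. r c a} < k" "k \<le> card {c\<in>B. r c b}"
    using a b unfolding top_k_def by auto
  thus False using e le by linarith
qed

lemma fold_proc:
  fixes A :: "'i::finite set"
  assumes sr: "strict_ranking r"
  shows "fold (proc_type r \<rho> A) M (C,q,\<kappa>) = (C',q',\<kappa>') \<Longrightarrow>
     C \<subseteq> C' \<and> (\<forall>j\<in>C'-C. \<forall>i\<in>A-C'. \<rho> j \<subseteq> \<rho> i \<longrightarrow> r j i)"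
proof (induction M arbitrary: C q \<kappa>)
  case Nil
  then show ?case by simp
next
  case (Cons h M)
  define B where "B = {a \<in> A. a \<notin> C \<and> h \<in> \<rho> a}"
  define ch where "ch = top_k r (min (\<kappa> h) q) B"
  obtain q1 \<kappa>1 where st: "proc_type r \<rho> A h (C,q,\<kappa>) = (C \<union> ch, q1, \<kappa>1)"
    unfolding proc_type_def ch_def B_def by (simp add: Let_def)
  have "fold (proc_type r \<rho> A) M (C \<union> ch, q1, \<kappa>1) = (C',q',\<kappa>')"
    using Cons.prems st by simp
  from Cons.IH[OF this] have ih: "C \<union> ch \<subseteq> C'"
    "\<forall>j\<in>C' - (C \<union> ch). \<forall>i\<in>A - C'. \<rho> j \<subseteq> \<rho> i \<longrightarrow> r j i" by auto
  have "\<forall>j\<in>ch - C. \<forall>i\<in>A - C'. \<rho> j \<subseteq> \<rho> i \<longrightarrow> r j i"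
  proof (intro ballI impI)
    fix j i assume j: "j \<in> ch - C" and i: "i \<in> A - C'" and rs: "\<rho> j \<subseteq> \<rho> i"
    have "j \<in> B" using j top_k_sub[of r "min (\<kappa> h) q" B] unfolding ch_def by blast
    hence "h \<in> \<rho> i" using rs unfolding B_def by auto
    hence "i \<in> B" using i ih(1) unfolding B_def by auto
    moreover have "i \<notin> ch" using i ih(1) by auto
    moreover have "j \<in> top_k r (min (\<kappa> h) q) B" using j unfolding ch_def by blast
    ultimately show "r j i" using top_k_better[OF sr finite, of j "min (\<kappa> h) q" B i]
      unfolding ch_def by blast
  qed
  have "\<forall>j\<in>C'-C. \<forall>i\<in>A-C'. \<rho> j \<subseteq> \<rho> i \<longrightarrow> r j i"
  proof (intro ballI impI)
    fix j i assume j: "j \<in> C' - C" and i: "i \<in> A - C'" and rs: "\<rho> j \<subseteq> \<rho> i"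
    show "r j i"
    proof (cases "j \<in> ch")
      case True thus ?thesis using j i rs \<open>\<forall>j\<in>ch - C. _\<close> by blast
    next
      case False thus ?thesis using j i rs ih(2) by blast
    qed
  qed
  then show ?case using ih(1) by blast
qed

lemma hsteps_fair:
  fixes A :: "'i::finite set"
  assumes sr: "strict_ranking r"
  shows "C \<subseteq> hsteps r \<rho> A n C q \<kappa> R \<and>
    (\<forall>j \<in> hsteps r \<rho> A n C q \<kappa> R - C. \<forall>i\<in>A - hsteps r \<rho> A n C q \<kappa> R. \<rho> j \<subseteq> \<rho> i \<longrightarrow> r j i)"
proof (induction n arbitrary: C q \<kappa> R)
  case 0
  then show ?case by simp
next
  case (Suc n)
  show ?case
  proof (cases "q = 0")
    case True
    then show ?thesis by simp
  next
    case q: False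
    show ?thesis
    proof (cases "R = []")
      case True
      have "\<forall>j \<in> top_k r q (A - C) - C. \<forall>i\<in>A - (C \<union> top_k r q (A - C)). r j i"
        using top_k_better[OF sr finite] by blast
      moreover have "hsteps r \<rho> A (Suc n) C q \<kappa> R = C \<union> top_k r q (A - C)" using q True by simp
      ultimately show ?thesis by auto
    next
      case R: False
      define M where "M = minimal_types \<rho> R"
      obtain C' q' \<kappa>' where f: "fold (proc_type r \<rho> A) M (C, q, \<kappa>) = (C',q',\<kappa>')"
        by (metis prod_cases3)
      have e: "hsteps r \<rho> A (Suc n) C q \<kappa> R = hsteps r \<rho> A n C' q' \<kappa>' (filter (\<lambda>h. h \<notin> set M) R)"
        using q R f by (simp add: M_def)
      have fp: "C \<subseteq> C'" "\<forall>j\<in>C'-C. \<forall>i\<in>A-C'. \<rho> j \<subseteq> \<rho> i \<longrightarrow> r j i"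
        using fold_proc[OF sr f] by auto
      have ih: "C' \<subseteq> hsteps r \<rho> A n C' q' \<kappa>' (filter (\<lambda>h. h \<notin> set M) R)"
        "\<forall>j \<in> hsteps r \<rho> A n C' q' \<kappa>' (filter (\<lambda>h. h \<notin> set M) R) - C'.
          \<forall>i\<in>A - hsteps r \<rho> A n C' q' \<kappa>' (filter (\<lambda>h. h \<notin> set M) R). \<rho> j \<subseteq> \<rho> i \<longrightarrow> r j i"
        using Suc.IH by auto
      show ?thesis unfolding e using fp ih by blast
    qed
  qed
qed

lemma choice_h_fair:
  fixes A :: "'i::finite set"
  assumes sr: "strict_ranking r" and j: "j \<in> choice_h r hs \<rho> q \<kappa> A"
    and i: "i \<in> A" "i \<notin> choice_h r hs \<rho> q \<kappa> A" and rs: "\<rho> j \<subseteq> \<rho> i"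
  shows "r j i"
proof (cases "\<forall>a \<in> A. \<rho> a = {}")
  case True
  hence e: "choice_h r hs \<rho> q \<kappa> A = top_k r q A" unfolding choice_h_def by simp
  show ?thesis using top_k_better[OF sr finite, where a=j and k=q and b=i] j i unfolding e by blast
next
  case False
  have e: "choice_h r hs \<rho> q \<kappa> A = hsteps r \<rho> A (Suc (length hs)) {} q \<kappa> hs"
    unfolding choice_h_def by (rule if_not_P[OF False])
  have "\<forall>j \<in> hsteps r \<rho> A (Suc (length hs)) {} q \<kappa> hs - {}. \<forall>i\<in>A - hsteps r \<rho> A (Suc (length hs)) {} q \<kappa> hs. \<rho> j \<subseteq> \<rho> i \<longrightarrow> r j i"
    using hsteps_fair[OF sr, where A=A and n="Suc (length hs)" and C="{}" and q=q and \<kappa>=\<kappa> and R=hs and \<rho>=\<rho>] by (rule conjunct2)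
  then show ?thesis using j i rs unfolding e by blast
qed

lemma agg_fold:
  fixes r :: "'i::finite \<Rightarrow> 'i \<Rightarrow> bool"
  assumes sr: "strict_ranking r"
  shows "fold (agg_step r hs \<rho> cap res s Y) vs (Ch0, Z0) = (Ch, Z) \<Longrightarrow>
    Ch0 \<subseteq> Ch \<and> Z0 \<subseteq> Z \<and> Ch \<subseteq> Ch0 \<union> indiv ` Z \<and>
    (\<forall>z \<in> Z - Z0. inst z = s \<and> indiv z \<in> Ch \<and>
       (\<forall>i. (i, s, cat z) \<in> Y \<longrightarrow> i \<notin> Ch \<longrightarrow> \<rho> (indiv z) \<subseteq> \<rho> i \<longrightarrow> r (indiv z) i))"
proof (induction vs arbitrary: Ch0 Z0)
  case Nil
  then show ?case by simp
next
  case (Cons v vs)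
  define Av where "Av = {i. (i, s, v) \<in> Y \<and> i \<notin> Ch0}"
  define sel where "sel = choice_h r hs \<rho> (cap v) (res v) Av"
  have st: "agg_step r hs \<rho> cap res s Y v (Ch0, Z0) = (Ch0 \<union> sel, Z0 \<union> {(i, s, v) | i. i \<in> sel})"
    unfolding agg_step_def Av_def sel_def by (simp add: Let_def)
  have "fold (agg_step r hs \<rho> cap res s Y) vs (Ch0 \<union> sel, Z0 \<union> {(i, s, v) | i. i \<in> sel}) = (Ch, Z)"
    using Cons.prems st by simp
  note ih = Cons.IH[OF this]
  have ihCh: "Ch0 \<union> sel \<subseteq> Ch" using ih[THEN conjunct1] .
  have new: "\<forall>z \<in> {(i, s, v) | i. i \<in> sel}. inst z = s \<and> indiv z \<in> Ch \<and>
       (\<forall>i. (i, s, cat z) \<in> Y \<longrightarrow> i \<notin> Ch \<longrightarrow> \<rho> (indiv z) \<subseteq> \<rho> i \<longrightarrow> r (indiv z) i)"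
  proof (intro ballI conjI allI impI)
    fix z assume "z \<in> {(i, s, v) | i. i \<in> sel}"
    then obtain j where z: "z = (j, s, v)" "j \<in> sel" by blast
    have iz: "indiv z = j" "inst z = s" "cat z = v" using z(1) by (simp_all add: indiv_def inst_def cat_def)
    show "inst z = s" using iz by simp
    show "indiv z \<in> Ch" using iz z(2) ihCh by blast
    fix i assume a: "(i, s, cat z) \<in> Y" "i \<notin> Ch" "\<rho> (indiv z) \<subseteq> \<rho> i"
    have h: "i \<in> Av" "i \<notin> sel" "\<rho> j \<subseteq> \<rho> i" using a iz ihCh unfolding Av_def by auto
    have "r j i" using choice_h_fair[OF sr, of j hs \<rho> "cap v" "res v" Av i] h z(2) unfolding sel_def by blast
    then show "r (indiv z) i" using iz by simp
  qed
  have selsub: "sel \<subseteq> indiv ` {(i, s, v) | i. i \<in> sel}"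
  proof
    fix j assume "j \<in> sel"
    hence "(j, s, v) \<in> {(i, s, v) | i. i \<in> sel}" by blast
    thus "j \<in> indiv ` {(i, s, v) | i. i \<in> sel}" by (rule image_eqI[rotated]) (simp add: indiv_def)
  qed
  define N where "N = {(i, s, v) | i. i \<in> sel}"
  have ih1: "Ch0 \<union> sel \<subseteq> Ch" using ih[THEN conjunct1] .
  have ih1b: "Z0 \<union> N \<subseteq> Z" using ih[THEN conjunct2, THEN conjunct1] unfolding N_def .
  have ih1c: "Ch \<subseteq> (Ch0 \<union> sel) \<union> indiv ` Z" using ih[THEN conjunct2, THEN conjunct2, THEN conjunct1] .
  have ih2: "\<forall>z \<in> Z - (Z0 \<union> N). inst z = s \<and> indiv z \<in> Ch \<and>
       (\<forall>i. (i, s, cat z) \<in> Y \<longrightarrow> i \<notin> Ch \<longrightarrow> \<rho> (indiv z) \<subseteq> \<rho> i \<longrightarrow> r (indiv z) i)"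
    using ih[THEN conjunct2, THEN conjunct2, THEN conjunct2] unfolding N_def .
  have NZ: "indiv ` N \<subseteq> indiv ` Z" using ih1b by (intro image_mono) simp
  have "sel \<subseteq> indiv ` Z" using selsub NZ unfolding N_def by (rule subset_trans)
  hence c3: "Ch \<subseteq> Ch0 \<union> indiv ` Z" using ih1c by blast
  have c4: "\<forall>z \<in> Z - Z0. inst z = s \<and> indiv z \<in> Ch \<and>
       (\<forall>i. (i, s, cat z) \<in> Y \<longrightarrow> i \<notin> Ch \<longrightarrow> \<rho> (indiv z) \<subseteq> \<rho> i \<longrightarrow> r (indiv z) i)"
  proof
    fix z assume zz: "z \<in> Z - Z0"
    show "inst z = s \<and> indiv z \<in> Ch \<and>
       (\<forall>i. (i, s, cat z) \<in> Y \<longrightarrow> i \<notin> Ch \<longrightarrow> \<rho> (indiv z) \<subseteq> \<rho> i \<longrightarrow> r (indiv z) i)"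
    proof (cases "z \<in> N")
      case True thus ?thesis using new unfolding N_def by (rule bspec[rotated])
    next
      case False
      hence "z \<in> Z - (Z0 \<union> N)" using zz by blast
      thus ?thesis using ih2 by (rule bspec[rotated])
    qed
  qed
  have "Ch0 \<subseteq> Ch" using ih1 by blast
  moreover have "Z0 \<subseteq> Z" using ih1b by blast
  ultimately show ?case using c3 c4 by (intro conjI)
qed

theorem theorem4:
  fixes better :: "'s::finite \<Rightarrow> 'i::finite \<Rightarrow> 'i \<Rightarrow> bool"
    and t :: "'i \<Rightarrow> rcat option"
    and hs :: "'h list"
    and \<rho> :: "'i \<Rightarrow> 'h set"
    and cap :: "'s \<Rightarrow> ptype \<Rightarrow> nat"
    and res :: "'s \<Rightarrow> ptype \<Rightarrow> 'h \<Rightarrow> nat"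
    and s :: 's
  assumes "\<forall>s'. strict_ranking (better s')"
    and "hierarchical hs \<rho>"
  shows "\<forall>Y \<subseteq> contracts t. \<forall>x \<in> Y. inst x = s \<longrightarrow>
           indiv x \<notin> indiv ` choice_hT better hs \<rho> cap res s Y \<longrightarrow>
           (\<forall>y \<in> choice_hT better hs \<rho> cap res s Y.
              better s (indiv y) (indiv x) \<or> cat x \<noteq> cat y \<or> \<rho> (indiv y) - \<rho> (indiv x) \<noteq> {})"
proof (intro allI impI ballI)
  fix Y x y
  assume x: "x \<in> Y" "inst x = s" and nx: "indiv x \<notin> indiv ` choice_hT better hs \<rho> cap res s Y"
    and y: "y \<in> choice_hT better hs \<rho> cap res s Y"
  have sr: "strict_ranking (better s)" using assms(1) by blast
  obtain Ch Z where f: "fold (agg_step (better s) hs \<rho> (cap s) (res s) s Y) cat_order ({}, {}) = (Ch, Z)"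
    by (metis prod.exhaust)
  define qD where "qD = cap s (Res OBC) - card {i. (i, s, Res OBC) \<in> Z}"
  define selD where "selD = top_k (better s) qD {i. (i, s, Open) \<in> Y \<and> i \<notin> Ch}"
  have out: "choice_hT better hs \<rho> cap res s Y = Z \<union> {(i, s, Open) | i. i \<in> selD}"
    unfolding choice_hT_def f qD_def selD_def by simp
  note inv = agg_fold[OF sr f]
  obtain i v where xe: "x = (i, s, v)" using x(2) by (cases x) (auto simp: inst_def)
  have iZ: "i \<notin> Ch" using nx inv unfolding out xe by (force simp: indiv_def)
  show "better s (indiv y) (indiv x) \<or> cat x \<noteq> cat y \<or> \<rho> (indiv y) - \<rho> (indiv x) \<noteq> {}"
  proof (cases "cat x = cat y \<and> \<rho> (indiv y) \<subseteq> \<rho> (indiv x)")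
    case False
    then show ?thesis by blast
  next
    case True
    have "better s (indiv y) i"
    proof (cases "y \<in> Z")
      case True
      then show ?thesis using inv \<open>cat x = cat y \<and> _\<close> x iZ unfolding xe
        by (auto simp: cat_def indiv_def)
    next
      case False
      then obtain j where yj: "y = (j, s, Open)" "j \<in> selD" using y out by auto
      have "v = Open" using True yj xe by (simp add: cat_def)
      have "i \<notin> selD" using nx out xe \<open>v = Open\<close> by (force simp: indiv_def)
      thus ?thesis using top_k_better[OF sr finite, where a=j and k=qD and b=i] yj x iZ \<open>v = Open\<close>
        unfolding selD_def xe by (auto simp: indiv_def)
    qed
    then show ?thesis by (simp add: xe indiv_def)
  qed
qed

end
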